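(* Let $q$ be an odd prime power, $n$ a positive integer with $n\mid(q-1)$, $\lambda\in\mathbb{F}_q^{*}$ with multiplicative order dividing $\frac{q-1}{n}$, and let $\alpha_1,\dots,\alpha_n\in\mathbb{F}_q^{*}$ be the (pairwise distinct) roots of $x^n-\lambda$, i.e. $x^n-\lambda=\prod_{i=1}^n(x-\alpha_i)$, in some fixed order. Let $\ell\ge0$, $\boldsymbol\eta=(\eta_0,\dots,\eta_\ell)\in\mathbb{F}_q^{\ell+1}\setminus\{\boldsymbol0\}$, and let $k$ be an integer with $2\le k\le\frac{n-2\ell-1}{2}$. Let $\boldsymbol v=(v_1,\dots,v_n)$ with $v_i\in\{-1,1\}$ for $1\le i\le n-k+1$ and $v_i\in\mathbb{F}_q\setminus\{-1,0,1\}$ for $n-k+2\le i\le n$. Then the $( * )$-$(\mathcal{L},\mathcal{P})$-TGRS code $\mathcal{C}$ is an LCD code, i.e. $\mathcal{C}\cap\mathcal{C}^{\perp}=\{\boldsymbol0\}$.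
   Context: The $( * )$-$(\mathcal{L},\mathcal{P})$-TGRS code is $\mathcal{C}=\{(v_1f(\alpha_1),\dots,v_nf(\alpha_n)) : f\in\mathcal{F}_{n,k,\boldsymbol\eta}\}$, where $\mathcal{F}_{n,k,\boldsymbol\eta}=\{\sum_{i=0}^{k-1}f_ix^i+f_0\sum_{j=0}^{\ell}\eta_jx^{k+j} : f_i\in\mathbb{F}_q\}$; equivalently it is generated by the $k\times n$ matrix whose first row is $\big(v_j(1+\sum_{t=0}^{\ell}\eta_t\alpha_j^{k+t})\big)_{j}$ and whose row $i$ ($1\le i\le k-1$) is $(v_j\alpha_j^{i})_j$. $\mathcal{C}^{\perp}$ is the dual with respect to the standard inner product $\sum_i x_iy_i$. *)

theory Defs
  imports "HOL-Computational_Algebra.Polynomial" "HOL-Library.Cardinality"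
begin

text \<open>Vectors of length n over a field are modelled as functions nat \<Rightarrow> 'a
  that are zero outside the index set {1..n}.\<close>

definition tgrs_poly :: "nat \<Rightarrow> nat \<Rightarrow> (nat \<Rightarrow> 'a::field) \<Rightarrow> (nat \<Rightarrow> 'a) \<Rightarrow> 'a poly" where
  "tgrs_poly k l eta fc =
     (\<Sum>i<k. monom (fc i) i) + smult (fc 0) (\<Sum>j\<le>l. monom (eta j) (k + j))"

definition tgrs_code :: "nat \<Rightarrow> nat \<Rightarrow> nat \<Rightarrow> (nat \<Rightarrow> 'a::field) \<Rightarrow> (nat \<Rightarrow> 'a)
    \<Rightarrow> (nat \<Rightarrow> 'a) \<Rightarrow> (nat \<Rightarrow> 'a) set" where
  "tgrs_code n k l eta alpha v =
     {(\<lambda>j. if j \<in> {1..n} then v j * poly (tgrs_poly k l eta fc) (alpha j) else 0) | fc. True}"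

definition dual_code :: "nat \<Rightarrow> (nat \<Rightarrow> 'a::field) set \<Rightarrow> (nat \<Rightarrow> 'a) set" where
  "dual_code n C = {y. (\<forall>j. j \<notin> {1..n} \<longrightarrow> y j = 0) \<and>
                        (\<forall>c\<in>C. (\<Sum>j=1..n. c j * y j) = 0)}"

definition is_LCD :: "nat \<Rightarrow> (nat \<Rightarrow> 'a::field) set \<Rightarrow> bool" where
  "is_LCD n C \<longleftrightarrow> C \<inter> dual_code n C = {(\<lambda>_. 0)}"

end

theory Submission imports Defs begin

lemma of_nat_card_zero: "(of_nat (CARD('a::{finite,ring_1})) :: 'a) = 0"
proof -
  have bij: "bij_betw (\<lambda>x::'a. x + 1) UNIV UNIV"
    by (rule bij_betw_byWitness[where f'="\<lambda>x. x - 1"]) auto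
  have "(\<Sum>x\<in>(UNIV::'a set). x) = (\<Sum>x\<in>(UNIV::'a set). x + 1)"
    using sum.reindex_bij_betw[OF bij, of "\<lambda>x. x"] by simp
  also have "\<dots> = (\<Sum>x\<in>(UNIV::'a set). x) + of_nat (CARD('a))"
    by (simp add: sum.distrib)
  finally show ?thesis by simp
qed

lemma n_nonzero:
  fixes n :: nat
  assumes "n dvd (CARD('a::{finite,field}) - 1)"
  shows "(of_nat n :: 'a) \<noteq> 0"
proof
  assume h: "(of_nat n :: 'a) = 0"
  obtain m where m: "CARD('a) - 1 = n * m" using assms by blast
  have c1: "CARD('a) \<ge> 1" by (simp add: Suc_leI)
  have "(of_nat (CARD('a)) :: 'a) = 0"
    by (rule of_nat_card_zero)
  moreover have "CARD('a) = n * m + 1" using m c1 by linarith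
  ultimately have "(of_nat (n*m+1) :: 'a) = 0" by simp
  then show False using h by simp
qed

lemma roots_card_le:
  fixes m :: nat
  assumes "0 < m"
  shows "card {z::'a::field. z ^ m = 1} \<le> m"
proof -
  let ?p = "monom (1::'a) m + [:-1:]"
  have deg: "degree ?p = m" using assms by (subst degree_add_eq_left) (auto simp: degree_monom_eq)
  have nz: "?p \<noteq> 0" using deg assms by auto
  have "{z::'a. z ^ m = 1} = {x. poly ?p x = 0}" by (auto simp: poly_monom)
  then show ?thesis using card_poly_roots_bound[OF nz] deg by simp
qed

lemma power_sum_zero:
  fixes alpha :: "nat \<Rightarrow> 'a::{finite,field}"
  assumes inj: "inj_on alpha {1..n}"
    and A: "alpha ` {1..n} = {x. x ^ n = lam}"
    and lam: "lam \<noteq> 0"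
    and m: "0 < m" "m < n"
  shows "(\<Sum>j=1..n. alpha j ^ m) = 0"
proof -
  let ?A = "{x::'a. x ^ n = lam}"
  have s: "(\<Sum>j=1..n. alpha j ^ m) = (\<Sum>a\<in>?A. a ^ m)"
    using sum.reindex[OF inj, of "\<lambda>a. a ^ m"] A by simp
  have cardA: "card ?A = n" using card_image[OF inj] A by simp
  have "1 \<in> {1..n}" using m by simp
  then have a1: "alpha 1 \<in> ?A" using A by blast
  then have a1nz: "alpha 1 \<noteq> 0" using lam m by auto
  let ?U = "{z::'a. z ^ n = 1}"
  have "inj_on (\<lambda>a. a / alpha 1) ?A" using a1nz by (auto simp: inj_on_def)
  moreover have "(\<lambda>a. a / alpha 1) ` ?A \<subseteq> ?U"
    using a1 a1nz by (auto simp: power_divide)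
  ultimately have "card ?A \<le> card ?U"
    by (meson card_inj_on_le finite)
  then have "card ?U > card {z::'a. z ^ m = 1}" using roots_card_le[OF m(1), where 'a='a] cardA m by linarith
  then have "\<not> ?U \<subseteq> {z::'a. z ^ m = 1}"
    by (meson card_mono finite not_le)
  then obtain z where z0: "z \<in> ?U" "z \<notin> {z::'a. z ^ m = 1}" by blast
  then have z: "z ^ n = 1" "z ^ m \<noteq> 1" by auto
  have znz: "z \<noteq> 0" using z(1) m by (metis gr_zeroI less_nat_zero_code power_0_left zero_neq_one)
  have bij: "bij_betw (\<lambda>a. z * a) ?A ?A"
  proof (rule bij_betw_imageI)
    show "inj_on (\<lambda>a. z * a) ?A" using znz by (auto simp: inj_on_def)
    show "(\<lambda>a. z * a) ` ?A = ?A"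
    proof
      show "(\<lambda>a. z * a) ` ?A \<subseteq> ?A" using z by (auto simp: power_mult_distrib)
      show "?A \<subseteq> (\<lambda>a. z * a) ` ?A"
      proof
        fix x assume "x \<in> ?A"
        then have "x / z \<in> ?A" using z by (simp add: power_divide)
        moreover have "x = z * (x / z)" using znz by simp
        ultimately show "x \<in> (\<lambda>a. z * a) ` ?A" by blast
      qed
    qed
  qed
  have "(\<Sum>a\<in>?A. a ^ m) = (\<Sum>a\<in>?A. (z * a) ^ m)"
    using sum.reindex_bij_betw[OF bij, of "\<lambda>a. a ^ m"] by simp
  also have "\<dots> = z ^ m * (\<Sum>a\<in>?A. a ^ m)"
    by (simp add: power_mult_distrib sum_distrib_left)
  finally have "(1 - z ^ m) * (\<Sum>a\<in>?A. a ^ m) = 0" by (simp add: algebra_simps)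
  then show ?thesis using s z by simp
qed

lemma poly_sum_roots:
  fixes alpha :: "nat \<Rightarrow> 'a::{finite,field}"
  assumes inj: "inj_on alpha {1..n}"
    and A: "alpha ` {1..n} = {x. x ^ n = lam}"
    and lam: "lam \<noteq> 0"
    and d: "degree h < n"
  shows "(\<Sum>j=1..n. poly h (alpha j)) = of_nat n * coeff h 0"
proof -
  have "(\<Sum>j=1..n. poly h (alpha j)) = (\<Sum>j=1..n. \<Sum>i\<le>degree h. coeff h i * alpha j ^ i)"
    by (simp add: poly_altdef)
  also have "\<dots> = (\<Sum>i\<le>degree h. coeff h i * (\<Sum>j=1..n. alpha j ^ i))"
    by (subst sum.swap) (simp add: sum_distrib_left)
  also have "\<dots> = (\<Sum>i\<le>degree h. if i = 0 then coeff h 0 * of_nat n else 0)"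
  proof (rule sum.cong[OF refl])
    fix i assume i: "i \<in> {..degree h}"
    show "coeff h i * (\<Sum>j=1..n. alpha j ^ i) = (if i = 0 then coeff h 0 * of_nat n else 0)"
    proof (cases "i = 0")
      case True then show ?thesis by simp
    next
      case False
      then have "(\<Sum>j=1..n. alpha j ^ i) = 0"
        using power_sum_zero[OF inj A lam] i d by simp
      then show ?thesis using False by simp
    qed
  qed
  also have "\<dots> = of_nat n * coeff h 0" by (simp add: sum.delta)
  finally show ?thesis .
qed


lemma tp_coeff:
  "coeff (tgrs_poly k l eta fc) i =
     (if i < k then fc i else 0) + fc 0 * (\<Sum>j\<le>l. if k + j = i then eta j else 0)"
  by (simp add: tgrs_poly_def coeff_sum coeff_monom sum_distrib_left if_distrib cong: if_cong)

lemma tp_coeff0: "0 < k \<Longrightarrow> coeff (tgrs_poly k l eta fc) 0 = fc 0"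
  by (simp add: tp_coeff)

lemma tp_deg: "degree (tgrs_poly k l eta fc) \<le> k + l"
proof (rule degree_le, intro allI impI)
  fix i assume "k + l < i"
  then show "coeff (tgrs_poly k l eta fc) i = 0"
    by (simp add: tp_coeff)
qed

lemma tp_deg0: "fc 0 = 0 \<Longrightarrow> degree (tgrs_poly k l eta fc) \<le> k - 1"
proof (rule degree_le, intro allI impI)
  fix i assume "fc 0 = 0" "k - 1 < i"
  then show "coeff (tgrs_poly k l eta fc) i = 0"
    by (simp add: tp_coeff)
qed

lemma tp_repr:
  assumes "coeff g 0 = 0" "degree g < k"
  shows "tgrs_poly k l eta (coeff g) = g"
proof -
  have "{..<k} = {..k-1}" using assms by auto
  then have "(\<Sum>i<k. monom (coeff g i) i) = g"
    using poly_as_sum_of_monoms'[of g "k-1"] assms by simp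
  then show ?thesis using assms by (simp add: tgrs_poly_def)
qed


theorem theorem4p3:
  fixes lam :: "'a::{finite,field}"
    and alpha v eta :: "nat \<Rightarrow> 'a"
    and n k l :: nat
  assumes q_odd: "odd CARD('a)"
    and n_pos: "0 < n"
    and n_dvd: "n dvd (CARD('a) - 1)"
    and lam_nz: "lam \<noteq> 0"
    and lam_ord: "lam ^ ((CARD('a) - 1) div n) = 1"
    and alpha_inj: "inj_on alpha {1..n}"
    and alpha_nz: "\<forall>i\<in>{1..n}. alpha i \<noteq> 0"
    and alpha_roots: "monom 1 n - [:lam:] = (\<Prod>i=1..n. [:- alpha i, 1:])"
    and eta_nz: "\<exists>j\<le>l. eta j \<noteq> 0"
    and k_ge: "2 \<le> k"
    and k_le: "2 * k + 2 * l + 1 \<le> n"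
    and v_pm1: "\<forall>i\<in>{1..n-k+1}. v i = 1 \<or> v i = -1"
    and v_other: "\<forall>i\<in>{n-k+2..n}. v i \<notin> {-1, 0, 1}"
  shows "is_LCD n (tgrs_code n k l eta alpha v)"
proof -
  let ?P = "tgrs_poly k l eta"
  let ?C = "tgrs_code n k l eta alpha v"
  define S where "S = {n-k+2..n}"
  have S_sub: "S \<subseteq> {1..n}" using k_le by (auto simp: S_def)
  have cardS: "card S = k - 1" using k_le k_ge by (simp add: S_def)
  have finS: "finite S" by (simp add: S_def)
  have A: "alpha ` {1..n} = {x. x ^ n = lam}"
  proof -
    have "\<And>x. x ^ n = lam \<longleftrightarrow> (\<exists>i\<in>{1..n}. x = alpha i)"
    proof -
      fix x
      have "poly (monom 1 n - [:lam:]) x = x ^ n - lam" by (simp add: poly_monom)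
      moreover have "poly (\<Prod>i=1..n. [:- alpha i, 1:]) x = (\<Prod>i=1..n. x - alpha i)"
        by (simp add: poly_prod)
      ultimately have "x ^ n - lam = (\<Prod>i=1..n. x - alpha i)" using alpha_roots by simp
      moreover have "(\<Prod>i=1..n. x - alpha i) = 0 \<longleftrightarrow> (\<exists>i\<in>{1..n}. x = alpha i)"
        by (subst prod_zero_iff) auto
      ultimately show "x ^ n = lam \<longleftrightarrow> (\<exists>i\<in>{1..n}. x = alpha i)"
        by (metis right_minus_eq)
    qed
    then show ?thesis by auto
  qed
  have nnz: "(of_nat n :: 'a) \<noteq> 0" using n_nonzero[OF n_dvd] .
  have vsq: "v j ^ 2 - 1 = 0" if "j \<in> {1..n}" "j \<notin> S" for j
  proof -
    have "j \<in> {1..n-k+1}" using that by (auto simp: S_def)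
    then have "v j = 1 \<or> v j = -1" using v_pm1 by blast
    then show ?thesis by (auto simp: power2_eq_square)
  qed
  have usq: "v j ^ 2 - 1 \<noteq> 0" if "j \<in> S" for j
  proof
    assume "v j ^ 2 - 1 = 0"
    then have "(v j - 1) * (v j + 1) = 0" by (simp add: algebra_simps power2_eq_square)
    then have "v j = 1 \<or> v j = -1" by (auto simp: add_eq_0_iff2)
    then show False using v_other that by (auto simp: S_def)
  qed
  have W: "(\<Sum>j=1..n. v j ^ 2 * poly h (alpha j)) =
             of_nat n * coeff h 0 + (\<Sum>j\<in>S. (v j ^ 2 - 1) * poly h (alpha j))"
    if "degree h < n" for h
  proof -
    have "(\<Sum>j=1..n. v j ^ 2 * poly h (alpha j)) =
          (\<Sum>j=1..n. poly h (alpha j)) + (\<Sum>j=1..n. (v j ^ 2 - 1) * poly h (alpha j))"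
      by (simp add: sum.distrib[symmetric] algebra_simps)
    also have "(\<Sum>j=1..n. (v j ^ 2 - 1) * poly h (alpha j)) = (\<Sum>j\<in>S. (v j ^ 2 - 1) * poly h (alpha j))"
      by (rule sum.mono_neutral_right) (use S_sub vsq in auto)
    also have "(\<Sum>j=1..n. poly h (alpha j)) = of_nat n * coeff h 0"
      by (rule poly_sum_roots[OF alpha_inj A lam_nz that])
    finally show ?thesis .
  qed
  show ?thesis unfolding is_LCD_def
  proof
    show "{\<lambda>_. 0} \<subseteq> ?C \<inter> dual_code n ?C"
    proof -
      have "?P (\<lambda>_. 0) = 0" by (simp add: tgrs_poly_def)
      then have "(\<lambda>_. 0) \<in> ?C" unfolding tgrs_code_def
        by (auto intro!: exI[of _ "\<lambda>_. 0"])
      moreover have "(\<lambda>_. 0) \<in> dual_code n ?C" by (simp add: dual_code_def)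
      ultimately show ?thesis by simp
    qed
  next
    show "?C \<inter> dual_code n ?C \<subseteq> {\<lambda>_. 0}"
    proof
      fix c assume c: "c \<in> ?C \<inter> dual_code n ?C"
      then obtain fc where cdef: "c = (\<lambda>j. if j \<in> {1..n} then v j * poly (?P fc) (alpha j) else 0)"
        by (auto simp: tgrs_code_def)
      define f where "f = ?P fc"
      have orth: "(\<Sum>j=1..n. v j ^ 2 * poly (f * ?P gc) (alpha j)) = 0" for gc
      proof -
        have "(\<lambda>j. if j \<in> {1..n} then v j * poly (?P gc) (alpha j) else 0) \<in> ?C"
          by (auto simp: tgrs_code_def)
        then have "(\<Sum>j=1..n. (if j \<in> {1..n} then v j * poly (?P gc) (alpha j) else 0) * c j) = 0"
          using c by (auto simp: dual_code_def)
        moreover have "(\<Sum>j=1..n. (if j \<in> {1..n} then v j * poly (?P gc) (alpha j) else 0) * c j)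
            = (\<Sum>j=1..n. v j ^ 2 * poly (f * ?P gc) (alpha j))"
          by (rule sum.cong) (auto simp: cdef f_def power2_eq_square algebra_simps)
        ultimately show ?thesis by simp
      qed
      have degf: "degree f \<le> k + l" by (simp add: f_def tp_deg)
      have froot: "poly f (alpha j0) = 0" if j0: "j0 \<in> S" for j0
      proof -
        define L where "L = (\<Prod>j\<in>S-{j0}. [:- alpha j, 1:])"
        define g where "g = [:0, 1:] * L"
        have degL: "degree L \<le> k - 2"
        proof -
          have "degree L \<le> sum (degree \<circ> (\<lambda>j. [:- alpha j, 1:])) (S - {j0})"
            unfolding L_def by (rule degree_prod_sum_le) (simp add: finS)
          also have "\<dots> = card (S - {j0})" by simp
          also have "\<dots> = k - 2" using cardS j0 finS by simp
          finally show ?thesis .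
        qed
        have degg: "degree g < k"
        proof -
          have "degree g \<le> degree [:0, 1::'a:] + degree L" unfolding g_def by (rule degree_mult_le)
          then show ?thesis using degL k_ge by simp
        qed
        have cg0: "coeff g 0 = 0" by (simp add: g_def)
        have gP: "?P (coeff g) = g" by (rule tp_repr[OF cg0 degg])
        have degfg: "degree (f * g) < n"
        proof -
          have "degree (f * g) \<le> degree f + degree g" by (rule degree_mult_le)
          then show ?thesis using degf degg k_le by linarith
        qed
        have "0 = (\<Sum>j=1..n. v j ^ 2 * poly (f * g) (alpha j))"
          using orth[of "coeff g"] gP by simp
        also have "\<dots> = of_nat n * coeff (f * g) 0 + (\<Sum>j\<in>S. (v j ^ 2 - 1) * poly (f * g) (alpha j))"
          by (rule W[OF degfg])
        also have "coeff (f * g) 0 = 0" by (simp add: coeff_mult cg0)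
        also have "(\<Sum>j\<in>S. (v j ^ 2 - 1) * poly (f * g) (alpha j))
             = (v j0 ^ 2 - 1) * poly (f * g) (alpha j0) + (\<Sum>j\<in>S-{j0}. (v j ^ 2 - 1) * poly (f * g) (alpha j))"
          by (rule sum.remove[OF finS j0])
        also have "(\<Sum>j\<in>S-{j0}. (v j ^ 2 - 1) * poly (f * g) (alpha j)) = 0"
        proof (rule sum.neutral, intro ballI)
          fix j assume "j \<in> S - {j0}"
          then have "poly L (alpha j) = 0" unfolding L_def poly_prod
            by (intro prod_zero) (auto simp: finS)
          then show "(v j ^ 2 - 1) * poly (f * g) (alpha j) = 0" by (simp add: g_def)
        qed
        finally have eq: "(v j0 ^ 2 - 1) * (poly f (alpha j0) * (alpha j0 * poly L (alpha j0))) = 0"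
          by (auto simp: g_def)
        have "poly L (alpha j0) \<noteq> 0"
        proof -
          have "\<forall>j\<in>S-{j0}. alpha j0 - alpha j \<noteq> 0"
            using j0 S_sub alpha_inj by (auto simp: inj_on_def)
          then show ?thesis unfolding L_def poly_prod by (simp add: finS)
        qed
        moreover have "alpha j0 \<noteq> 0" using alpha_nz j0 S_sub by auto
        ultimately show ?thesis using eq usq[OF j0] by simp
      qed
      have f0: "fc 0 = 0"
      proof -
        have degff: "degree (f * f) < n"
        proof -
          have "degree (f * f) \<le> degree f + degree f" by (rule degree_mult_le)
          then show ?thesis using degf k_le by linarith
        qed
        have "0 = (\<Sum>j=1..n. v j ^ 2 * poly (f * f) (alpha j))"
          using orth[of fc] by (simp add: f_def)
        also have "\<dots> = of_nat n * coeff (f * f) 0 + (\<Sum>j\<in>S. (v j ^ 2 - 1) * poly (f * f) (alpha j))"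
          by (rule W[OF degff])
        also have "(\<Sum>j\<in>S. (v j ^ 2 - 1) * poly (f * f) (alpha j)) = 0"
          using froot by (simp)
        also have "coeff (f * f) 0 = fc 0 * fc 0"
          using k_ge by (simp add: coeff_mult f_def tp_coeff0)
        finally show ?thesis using nnz by simp
      qed
      have fz: "f = 0"
      proof (rule ccontr)
        assume fnz: "f \<noteq> 0"
        have degf0: "degree f \<le> k - 1" unfolding f_def by (rule tp_deg0[where fc=fc, OF f0])
        have sub: "insert 0 (alpha ` S) \<subseteq> {x. poly f x = 0}"
        proof -
          have "poly f 0 = 0" using k_ge f0 by (simp add: poly_0_coeff_0 f_def tp_coeff0)
          then show ?thesis using froot by auto
        qed
        have "inj_on alpha S" using alpha_inj S_sub by (rule inj_on_subset)
        then have "card (alpha ` S) = k - 1" using cardS by (simp add: card_image)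
        moreover have "0 \<notin> alpha ` S" using alpha_nz S_sub by auto
        ultimately have "card (insert 0 (alpha ` S)) = k" using finS k_ge by simp
        moreover have "card (insert 0 (alpha ` S)) \<le> card {x. poly f x = 0}"
          by (rule card_mono[OF _ sub]) (simp add: poly_roots_finite[OF fnz])
        ultimately have "k \<le> degree f" using card_poly_roots_bound[OF fnz] by linarith
        then show False using degf0 k_ge by linarith
      qed
      show "c \<in> {\<lambda>_. 0}" using fz by (auto simp: cdef f_def[symmetric])
    qed
  qed
qed

end
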